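(* Let $w$ be a graphon and $x\in[0,1]$. Then the suprema defining the shell index and the degeneracy are attained, and $\delta_x(w)=\max\{\kappa\in[0,1]: x\in K_\kappa(w)\}$, $\delta(w)=\max\{\kappa\in[0,1]: K_\kappa(w)\neq\emptyset\}=\max\{\delta_y(w): y\in[0,1]\}$.
   Context: A graphon is a Lebesgue-measurable symmetric function $w:[0,1]^2\to[0,1]$. For a measurable $K\subseteq[0,1]$ let $d_w^K(x)=\int_K w(x,y)\,\mathrm{d}y$ and $d_w(x)=d_w^{[0,1]}(x)$. For $\kappa\in[0,1]$ define recursively $K^{1}_{\kappa}(w)=\{x: d_w(x)\ge\kappa\}$ and $K^{n+1}_{\kappa}(w)=\{x\in K^{n}_{\kappa}(w): d_w^{K^{n}_{\kappa}(w)}(x)\ge\kappa\}$, and let the $\kappa$-core be $K_{\kappa}(w)=\bigcap_{n\ge1}K^{n}_{\kappa}(w)$. The shell index of $x$ is $\delta_x(w)=\sup\{\kappa: x\in K_\kappa(w)\}$ and the degeneracy is $\delta(w)=\sup\{\kappa: |K_\kappa(w)|>0\}$, with $|\cdot|$ Lebesgue measure. *)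

theory Defs
  imports "HOL-Analysis.Analysis"
begin

text \<open>A graphon: Lebesgue-measurable symmetric function on the unit square with values in [0,1].
  It is represented as a curried real function; only its values on the unit square matter.\<close>
definition graphon :: "(real \<Rightarrow> real \<Rightarrow> real) \<Rightarrow> bool" where
  "graphon w \<longleftrightarrow>
     (\<lambda>(x, y). w x y) \<in> borel_measurable (lebesgue_on ({0..1} \<times> {0..1}))
   \<and> (\<forall>x\<in>{0..1}. \<forall>y\<in>{0..1}. w x y = w y x)
   \<and> (\<forall>x\<in>{0..1}. \<forall>y\<in>{0..1}. 0 \<le> w x y \<and> w x y \<le> 1)"

definition gdeg :: "(real \<Rightarrow> real \<Rightarrow> real) \<Rightarrow> real set \<Rightarrow> real \<Rightarrow> real" where
  "gdeg w K x = (LINT y:K|lebesgue. w x y)"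

text \<open>core_step w k n is the set K^{n+1}_k(w) of the paper.\<close>
primrec core_step :: "(real \<Rightarrow> real \<Rightarrow> real) \<Rightarrow> real \<Rightarrow> nat \<Rightarrow> real set" where
  "core_step w k 0 = {x \<in> {0..1}. gdeg w {0..1} x \<ge> k}"
| "core_step w k (Suc n) = {x \<in> core_step w k n. gdeg w (core_step w k n) x \<ge> k}"

definition kcore :: "(real \<Rightarrow> real \<Rightarrow> real) \<Rightarrow> real \<Rightarrow> real set" where
  "kcore w k = (\<Inter>n. core_step w k n)"

definition shell_index :: "(real \<Rightarrow> real \<Rightarrow> real) \<Rightarrow> real \<Rightarrow> real" where
  "shell_index w x = Sup {k \<in> {0..1}. x \<in> kcore w k}"

definition degeneracy :: "(real \<Rightarrow> real \<Rightarrow> real) \<Rightarrow> real" where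
  "degeneracy w = Sup {k \<in> {0..1}. measure lebesgue (kcore w k) > 0}"

end

theory Submission
  imports Defs
begin


lemma gdeg_meas:
  assumes g: "graphon w" and K: "K \<in> sets lebesgue" "K \<subseteq> {0..1}"
  shows "\<exists>I \<in> borel_measurable lebesgue. AE x in lebesgue. x \<in> {0..1} \<longrightarrow>
     gdeg w K x = I x \<and> (\<lambda>y. indicator K y * w x y) \<in> borel_measurable lebesgue"
proof -
  let ?S = "{0..1::real}"
  define F where "F = (\<lambda>z::real\<times>real. if z \<in> ?S \<times> ?S then (case z of (x,y) \<Rightarrow> w x y) else 0)"
  have SS: "?S \<times> ?S \<in> sets (lebesgue :: (real \<times> real) measure)"
  proof -
    have "?S \<times> ?S \<in> sets (borel :: (real \<times> real) measure)"
      by (intro borel_closed closed_Times) auto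
    then show ?thesis by simp
  qed
  have "F \<in> borel_measurable lebesgue"
    unfolding F_def using borel_measurable_if[OF SS] g unfolding graphon_def by blast
  then obtain G where G: "G \<in> borel_measurable (lborel :: (real\<times>real) measure)"
    and GF: "AE z in lborel. F z = G z"
    using completion_ex_borel_measurable_real by blast
  have G2: "G \<in> borel_measurable (lborel \<Otimes>\<^sub>M lborel)"
    using G by (simp add: lborel_prod)
  have "AE z in (lborel \<Otimes>\<^sub>M lborel). F z = G z" unfolding lborel_prod using GF .
  then have ae1: "AE x in lborel. AE y in lborel. F (x,y) = G (x,y)"
    by (rule lborel_pair.AE_pair)
  have "(indicator K :: real \<Rightarrow> real) \<in> borel_measurable (lebesgue :: real measure)"
    using K by simp
  then obtain k' :: "real \<Rightarrow> real" where k': "k' \<in> borel_measurable (lborel :: real measure)"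
    and kk: "AE y in lborel. (indicator K y :: real) = k' y"
    using completion_ex_borel_measurable_real by blast
  define I where "I = (\<lambda>x. \<integral>y. k' y * G (x,y) \<partial>lborel)"
  have Ib: "I \<in> borel_measurable lborel"
    unfolding I_def
    by (rule lborel.borel_measurable_lebesgue_integral) (use G2 k' in measurable)
  show ?thesis
  proof (intro bexI[of _ I])
    show "I \<in> borel_measurable lebesgue" using Ib by (rule measurable_completion)
    show "AE x in lebesgue. x \<in> ?S \<longrightarrow> gdeg w K x = I x \<and> (\<lambda>y. indicator K y * w x y) \<in> borel_measurable lebesgue"
    proof (rule AE_completion)
      show "AE x in lborel. x \<in> ?S \<longrightarrow> gdeg w K x = I x \<and> (\<lambda>y. indicator K y * w x y) \<in> borel_measurable lebesgue"
        using ae1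
      proof eventually_elim
        case (elim x)
        show ?case
        proof
          assume x: "x \<in> ?S"
          have eq: "indicator K y * w x y = indicator K y * F (x,y)" for y
            using x K(2) by (auto simp: F_def indicator_def)
          have ae2: "AE y in lebesgue. indicator K y * w x y = k' y * G (x,y)"
            apply (rule AE_completion)
            using elim kk by eventually_elim (metis eq)
          have mb: "(\<lambda>y. k' y * G (x,y)) \<in> borel_measurable lborel"
            using G2 k' by measurable
          then have mb': "(\<lambda>y. k' y * G (x,y)) \<in> borel_measurable lebesgue"
            by (rule measurable_completion)
          have m: "(\<lambda>y. indicator K y * w x y) \<in> borel_measurable lebesgue"
            using borel_measurable_AE[OF mb'] ae2 by (simp add: eq_commute)
          have "gdeg w K x = (\<integral>y. indicator K y * w x y \<partial>lebesgue)"
            by (simp add: gdeg_def set_lebesgue_integral_def)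
          also have "\<dots> = (\<integral>y. k' y * G (x,y) \<partial>lebesgue)"
            by (rule integral_cong_AE[OF m mb' ae2])
          also have "\<dots> = I x" unfolding I_def by (rule integral_completion[OF mb])
          finally show "gdeg w K x = I x \<and> (\<lambda>y. indicator K y * w x y) \<in> borel_measurable lebesgue"
            using m by simp
        qed
      qed
    qed
  qed
qed



lemma graphon_bounds:
  assumes "graphon w" "x \<in> {0..1}"
  shows "\<And>y. y \<in> {0..1} \<Longrightarrow> 0 \<le> w x y \<and> w x y \<le> 1"
  using assms unfolding graphon_def by blast

lemma gdeg_alt: "gdeg w K x = (\<integral>y. indicator K y * w x y \<partial>lebesgue)"
  by (simp add: gdeg_def set_lebesgue_integral_def)

lemma gdeg_nonneg:
  assumes "graphon w" "K \<subseteq> {0..1}" "x \<in> {0..1}"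
  shows "0 \<le> gdeg w K x"
proof -
  have "0 \<le> indicator K y * w x y" for y
    using graphon_bounds[OF assms(1,3), of y] assms(2) by (cases "y \<in> K") auto
  then show ?thesis unfolding gdeg_alt by (intro integral_nonneg_AE AE_I2)
qed


lemma finite_meas_sub:
  assumes "K \<subseteq> {0..1::real}" 
  shows "emeasure lebesgue K \<noteq> \<infinity>"
proof -
  have "emeasure lebesgue K \<le> emeasure lebesgue {0..1::real}"
    using assms by (intro emeasure_mono) auto
  then show ?thesis by (auto simp: top_unique)
qed

lemma gdeg_le_measure:
  assumes "graphon w" "K \<in> sets lebesgue" "K \<subseteq> {0..1}" "x \<in> {0..1}"
  shows "gdeg w K x \<le> measure lebesgue K"
proof -
  have int: "integrable lebesgue (indicator K :: real \<Rightarrow> real)"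
    using assms(2) finite_meas_sub[OF assms(3)] by (simp add: integrable_indicator_iff less_top)
  have b: "indicator K y * w x y \<le> indicator K y" "0 \<le> (indicator K y :: real)" for y
    using graphon_bounds[OF assms(1,4), of y] assms(3) by (cases "y \<in> K"; auto)+
  have "gdeg w K x \<le> (\<integral>y. indicator K y \<partial>lebesgue)"
    unfolding gdeg_alt by (rule integral_mono'[OF int b])
  then show ?thesis by simp
qed

lemma gdeg_integrable:
  assumes "gdeg w K x \<noteq> 0"
  shows "set_integrable lebesgue K (w x)"
  using assms not_integrable_integral_eq unfolding gdeg_def set_lebesgue_integral_def set_integrable_def
  by blast

lemma gdeg_mono:
  assumes "graphon w" "set_integrable lebesgue B (w x)" "A \<subseteq> B" "B \<subseteq> {0..1}" "x \<in> {0..1}"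
  shows "gdeg w A x \<le> gdeg w B x"
proof -
  have int: "integrable lebesgue (\<lambda>y. indicator B y * w x y)"
    using assms(2) by (simp add: set_integrable_def)
  have b: "indicator A y * w x y \<le> indicator B y * w x y" "0 \<le> indicator B y * w x y" for y
    using graphon_bounds[OF assms(1,5), of y] assms(3,4) by (cases "y \<in> A"; cases "y \<in> B"; auto)+
  show ?thesis unfolding gdeg_alt by (rule integral_mono'[OF int b])
qed


lemma gdeg_set_meas:
  assumes g: "graphon w" and K: "K \<in> sets lebesgue" "K \<subseteq> {0..1}" and K': "K' \<in> sets lebesgue" "K' \<subseteq> {0..1}"
  shows "{x \<in> K'. k \<le> gdeg w K x} \<in> sets lebesgue"
proof -
  obtain I where I: "I \<in> borel_measurable lebesgue"
    and ae: "AE x in lebesgue. x \<in> {0..1} \<longrightarrow> gdeg w K x = I x"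
  proof -
    from gdeg_meas[OF g K] obtain I where "I \<in> borel_measurable lebesgue"
      "AE x in lebesgue. x \<in> {0..1} \<longrightarrow> gdeg w K x = I x \<and> (\<lambda>y. indicator K y * w x y) \<in> borel_measurable lebesgue"
      by blast
    moreover have "AE x in lebesgue. x \<in> {0..1} \<longrightarrow> gdeg w K x = I x"
      using calculation(2) by (rule eventually_mono) blast
    ultimately show ?thesis using that[of I] by blast
  qed
  have "{x \<in> space lebesgue. k \<le> I x} \<in> sets lebesgue"
    using I unfolding borel_measurable_iff_ge by blast
  then have A: "K' \<inter> {x \<in> space lebesgue. k \<le> I x} \<in> sets lebesgue"
    using K'(1) by (intro sets.Int)
  show ?thesis
  proof (rule completion.in_sets_AE[OF _ A])
    show "AE x in lebesgue. (x \<in> K' \<inter> {x \<in> space lebesgue. k \<le> I x}) = (x \<in> {x \<in> K'. k \<le> gdeg w K x})"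
      using ae
    proof eventually_elim
      case (elim x)
      then show ?case using K'(2) by (cases "x \<in> {0..1}") auto
    qed
  qed simp
qed


lemma core_sub: "core_step w k n \<subseteq> {0..1}"
  by (induction n) auto

lemma core_Suc_sub: "core_step w k (Suc n) \<subseteq> core_step w k n"
  by auto

lemma core_decseq: "decseq (core_step w k)"
  by (rule decseq_SucI) (rule core_Suc_sub)

lemma core_sub0: "core_step w k n \<subseteq> core_step w k 0"
  using core_decseq[of w k] unfolding decseq_def by blast

lemma core_meas:
  assumes "graphon w"
  shows "core_step w k n \<in> sets lebesgue"
proof (induction n)
  case 0
  have "{0..1::real} \<in> sets lebesgue" by simp
  then show ?case using gdeg_set_meas[OF assms, of "{0..1}" "{0..1}" k] by simp
next
  case (Suc n)
  then show ?case using gdeg_set_meas[OF assms Suc core_sub Suc core_sub, of k] by simp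
qed

lemma kcore_sub: "kcore w k \<subseteq> {0..1}"
  unfolding kcore_def using core_sub[of w k 0] by blast

lemma kcore_meas:
  assumes "graphon w"
  shows "kcore w k \<in> sets lebesgue"
  unfolding kcore_def using core_meas[OF assms] by blast

lemma core_zero:
  assumes "graphon w" "k \<le> 0"
  shows "core_step w k n = {0..1}"
proof (induction n)
  case 0
  show ?case using gdeg_nonneg[OF assms(1), of "{0..1}"] assms(2) by force
next
  case (Suc n)
  show ?case using gdeg_nonneg[OF assms(1), of "core_step w k n"] assms(2) Suc by force
qed

lemma core_mono:
  assumes g: "graphon w" and kk: "0 \<le> k" "k \<le> k'"
  shows "core_step w k' n \<subseteq> core_step w k n"
proof (cases "k' \<le> 0")
  case True
  then have "k = 0" "k' = 0" using kk by auto
  then show ?thesis by simp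
next
  case False
  then have k'pos: "k' > 0" by simp
  show ?thesis
  proof (induction n)
    case 0
    then show ?case using kk by auto
  next
    case (Suc n)
    show ?case
    proof
      fix x assume x: "x \<in> core_step w k' (Suc n)"
      then have xn: "x \<in> core_step w k' n" and d: "k' \<le> gdeg w (core_step w k' n) x" by auto
      have x0: "x \<in> core_step w k' 0" using xn core_sub0 by blast
      then have xS: "x \<in> {0..1}" and d0: "k' \<le> gdeg w {0..1} x" by auto
      have int: "set_integrable lebesgue {0..1} (w x)"
        using d0 k'pos by (intro gdeg_integrable) auto
      have int2: "set_integrable lebesgue (core_step w k n) (w x)"
        by (rule set_integrable_subset[OF int core_meas[OF g] core_sub])
      have "gdeg w (core_step w k' n) x \<le> gdeg w (core_step w k n) x"
        by (rule gdeg_mono[OF g int2 Suc core_sub xS])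
      then show "x \<in> core_step w k (Suc n)" using Suc xn d kk by auto
    qed
  qed
qed

lemma kcore_mono:
  assumes g: "graphon w" and kk: "0 \<le> k" "k \<le> k'"
  shows "kcore w k' \<subseteq> kcore w k"
  unfolding kcore_def using core_mono[OF assms] by blast

lemma kcore_zero:
  assumes "graphon w"
  shows "kcore w 0 = {0..1}"
  unfolding kcore_def using core_zero[OF assms, of 0] by simp

lemma kcore_measure:
  assumes g: "graphon w" and k: "0 < k" and x: "x \<in> kcore w k"
  shows "k \<le> measure lebesgue (kcore w k)"
proof -
  have lim: "(\<lambda>n. measure lebesgue (core_step w k n)) \<longlonglongrightarrow> measure lebesgue (\<Inter>n. core_step w k n)"
  proof (rule Lim_measure_decseq)
    show "range (core_step w k) \<subseteq> sets lebesgue" using core_meas[OF g] by blast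
    show "decseq (core_step w k)" by (rule core_decseq)
    show "emeasure lebesgue (core_step w k n) \<noteq> \<infinity>" for n
      by (rule finite_meas_sub[OF core_sub])
  qed
  have "k \<le> measure lebesgue (core_step w k n)" for n
  proof -
    have "x \<in> core_step w k (Suc n)" using x unfolding kcore_def by blast
    then have "k \<le> gdeg w (core_step w k n) x" and "x \<in> {0..1}" using core_sub[of w k n] by auto
    then show ?thesis using gdeg_le_measure[OF g core_meas[OF g] core_sub, of x k n] by linarith
  qed
  then show ?thesis using LIMSEQ_le_const[OF lim] unfolding kcore_def by blast
qed


lemma kseq_props:
  fixes \<kappa> :: real
  assumes "0 < \<kappa>"
  defines "kj \<equiv> (\<lambda>j::nat. \<kappa> - \<kappa> / (real j + 2))"
  shows "\<And>j. 0 < kj j" "\<And>j. kj j < \<kappa>" "incseq kj" "kj \<longlonglongrightarrow> \<kappa>"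
proof -
  fix j
  have "\<kappa> * 1 < \<kappa> * (real j + 2)" using assms by (intro mult_strict_left_mono) auto
  then have "\<kappa> / (real j + 2) < \<kappa>" by (simp add: divide_less_eq)
  then show "0 < kj j" by (simp add: kj_def)
  show "kj j < \<kappa>" using assms by (simp add: kj_def)
next
  show "incseq kj"
  proof (rule incseq_SucI)
    fix j
    have "\<kappa> / (real (Suc j) + 2) \<le> \<kappa> / (real j + 2)"
      using assms by (intro divide_left_mono) auto
    then show "kj j \<le> kj (Suc j)" by (simp add: kj_def)
  qed
next
  have "(\<lambda>j. \<kappa> / real (j + 2)) \<longlonglongrightarrow> 0"
    using LIMSEQ_ignore_initial_segment[OF lim_const_over_n[of \<kappa>], of 2] by simp
  then have "(\<lambda>j. \<kappa> / (real j + 2)) \<longlonglongrightarrow> 0"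
    by (simp add: add.commute)
  then have "(\<lambda>j. \<kappa> - \<kappa> / (real j + 2)) \<longlonglongrightarrow> \<kappa> - 0"
    by (intro tendsto_intros)
  then show "kj \<longlonglongrightarrow> \<kappa>" by (simp add: kj_def)
qed


lemma core_limit:
  assumes g: "graphon w" and kp: "0 < \<kappa>"
  shows "\<forall>x. (\<forall>k. 0 \<le> k \<and> k < \<kappa> \<longrightarrow> x \<in> core_step w k n) \<longrightarrow> x \<in> core_step w \<kappa> n"
proof -
  define kj where "kj = (\<lambda>j::nat. \<kappa> - \<kappa> / (real j + 2))"
  have kj: "\<And>j. 0 < kj j" "\<And>j. kj j < \<kappa>" "incseq kj" "kj \<longlonglongrightarrow> \<kappa>"
    using kseq_props[OF kp] unfolding kj_def by auto
  have ex: "\<exists>j. k \<le> kj j" if "k < \<kappa>" for k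
  proof -
    have "eventually (\<lambda>j. k < kj j) sequentially"
      using order_tendstoD(1)[OF kj(4) that] .
    then obtain j where "k < kj j" by (auto simp: eventually_sequentially)
    then show ?thesis by (intro exI[of _ j]) simp
  qed
  show ?thesis
  proof (induction n)
    case 0
    show ?case
    proof (intro allI impI)
      fix x assume h: "\<forall>k. 0 \<le> k \<and> k < \<kappa> \<longrightarrow> x \<in> core_step w k 0"
      have h0: "x \<in> core_step w (kj j) 0" for j
        using h kj(1,2)[of j] less_imp_le[OF kj(1)[of j]] by blast
      then have xS: "x \<in> {0..1}" by simp
      have "kj j \<le> gdeg w {0..1} x" for j
        using h0[of j] by simp
      then have "\<kappa> \<le> gdeg w {0..1} x"
        by (intro LIMSEQ_le_const2[OF kj(4)]) auto
      then show "x \<in> core_step w \<kappa> 0" using xS by simp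
    qed
  next
    case (Suc n)
    show ?case
    proof (intro allI impI)
      fix x assume h: "\<forall>k. 0 \<le> k \<and> k < \<kappa> \<longrightarrow> x \<in> core_step w k (Suc n)"
      have hk: "x \<in> core_step w k n \<and> k \<le> gdeg w (core_step w k n) x" if "0 \<le> k" "k < \<kappa>" for k
        using h that by auto
      have xn: "x \<in> core_step w \<kappa> n" using Suc hk by blast
      have xS: "x \<in> {0..1}" using xn core_sub[of w \<kappa> n] by blast
      define A where "A = (\<lambda>j. core_step w (kj j) n)"
      have Ameas: "\<And>j. A j \<in> sets lebesgue" unfolding A_def by (rule core_meas[OF g])
      have Adec: "decseq A" unfolding decseq_def A_def
      proof (intro allI impI)
        fix m p :: nat assume "m \<le> p"
        then have "kj m \<le> kj p" using kj(3) unfolding incseq_def by blast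
        then show "core_step w (kj p) n \<subseteq> core_step w (kj m) n"
          using core_mono[OF g less_imp_le[OF kj(1)[of m]]] by blast
      qed
      have "x \<in> core_step w (kj 0) n" using hk[of "kj 0"] kj(1,2)[of 0] by simp
      then have x0: "x \<in> core_step w (kj 0) 0" using core_sub0 by blast
      then have "kj 0 \<le> gdeg w {0..1} x" by simp
      then have int: "set_integrable lebesgue {0..1} (w x)"
        using kj(1)[of 0] by (intro gdeg_integrable) auto
      have int0: "set_integrable lebesgue (A 0) (w x)"
        by (rule set_integrable_subset[OF int Ameas]) (simp add: A_def core_sub)
      have lim: "(\<lambda>j. gdeg w (A j) x) \<longlonglongrightarrow> gdeg w (\<Inter>j. A j) x"
        unfolding gdeg_def by (rule set_integral_cont_down[OF Ameas Adec int0])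
      have "kj j \<le> gdeg w (A j) x" for j
        unfolding A_def using hk[of "kj j"] kj(1,2)[of j] by simp
      then have ge: "\<kappa> \<le> gdeg w (\<Inter>j. A j) x"
        by (intro LIMSEQ_le[OF kj(4) lim]) auto
      have sub: "(\<Inter>j. A j) \<subseteq> core_step w \<kappa> n"
      proof
        fix y assume y: "y \<in> (\<Inter>j. A j)"
        have "y \<in> core_step w k n" if k0: "0 \<le> k" and kl: "k < \<kappa>" for k
        proof -
          obtain j where "k \<le> kj j" using ex[OF kl] by blast
          then have "core_step w (kj j) n \<subseteq> core_step w k n" by (rule core_mono[OF g k0])
          then show ?thesis using y unfolding A_def by blast
        qed
        then show "y \<in> core_step w \<kappa> n" using Suc by blast
      qed
      have intn: "set_integrable lebesgue (core_step w \<kappa> n) (w x)"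
        by (rule set_integrable_subset[OF int core_meas[OF g] core_sub])
      have "gdeg w (\<Inter>j. A j) x \<le> gdeg w (core_step w \<kappa> n) x"
        by (rule gdeg_mono[OF g intn sub core_sub xS])
      then show "x \<in> core_step w \<kappa> (Suc n)" using xn ge by simp
    qed
  qed
qed

lemma kcore_limit:
  assumes g: "graphon w" and kp: "0 < \<kappa>" and h: "\<And>k. 0 \<le> k \<Longrightarrow> k < \<kappa> \<Longrightarrow> x \<in> kcore w k"
  shows "x \<in> kcore w \<kappa>"
  unfolding kcore_def using core_limit[OF g kp] h unfolding kcore_def by blast


lemma shell_attained:
  assumes g: "graphon w" and x: "x \<in> {0..1}"
  shows "shell_index w x \<in> {k \<in> {0..1}. x \<in> kcore w k}
       \<and> (\<forall>k \<in> {k \<in> {0..1}. x \<in> kcore w k}. k \<le> shell_index w x)"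
proof -
  let ?T = "{k \<in> {0..1::real}. x \<in> kcore w k}"
  have T0: "0 \<in> ?T" using kcore_zero[OF g] x by simp
  have bdd: "bdd_above ?T" by (rule bdd_aboveI[of _ 1]) auto
  have ub: "\<forall>k\<in>?T. k \<le> shell_index w x"
    unfolding shell_index_def using bdd by (auto intro: cSup_upper)
  have ne: "?T \<noteq> {}" using T0 by blast
  have le1: "shell_index w x \<le> 1"
    unfolding shell_index_def using ne by (intro cSup_least) auto
  have ge0: "0 \<le> shell_index w x" using ub T0 by blast
  have "x \<in> kcore w (shell_index w x)"
  proof (cases "shell_index w x = 0")
    case True then show ?thesis using T0 by simp
  next
    case False
    then have pos: "0 < shell_index w x" using ge0 by simp
    show ?thesis
    proof (rule kcore_limit[OF g pos])
      fix k :: real assume k0: "0 \<le> k" and kl: "k < shell_index w x"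
      then obtain t where t: "t \<in> ?T" "k < t"
        using less_cSup_iff[OF ne bdd] unfolding shell_index_def by blast
      then show "x \<in> kcore w k" using kcore_mono[OF g k0, of t] by auto
    qed
  qed
  then show ?thesis using ub le1 ge0 by simp
qed

theorem lemma4:
  fixes w :: "real \<Rightarrow> real \<Rightarrow> real" and x :: real
  assumes "graphon w" and "x \<in> {0..1}"
  shows "shell_index w x \<in> {k \<in> {0..1}. x \<in> kcore w k}
       \<and> (\<forall>k \<in> {k \<in> {0..1}. x \<in> kcore w k}. k \<le> shell_index w x)
       \<and> degeneracy w \<in> {k \<in> {0..1}. measure lebesgue (kcore w k) > 0}
       \<and> (\<forall>k \<in> {k \<in> {0..1}. measure lebesgue (kcore w k) > 0}. k \<le> degeneracy w)
       \<and> degeneracy w \<in> {k \<in> {0..1}. kcore w k \<noteq> {}}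
       \<and> (\<forall>k \<in> {k \<in> {0..1}. kcore w k \<noteq> {}}. k \<le> degeneracy w)
       \<and> (\<exists>y \<in> {0..1}. shell_index w y = degeneracy w)
       \<and> (\<forall>y \<in> {0..1}. shell_index w y \<le> degeneracy w)"
proof -
  note g = assms(1)
  let ?P = "{k \<in> {0..1::real}. measure lebesgue (kcore w k) > 0}"
  let ?Q = "{k \<in> {0..1::real}. kcore w k \<noteq> {}}"
  have PQ: "?P = ?Q"
  proof (intro set_eqI iffI)
    fix k assume "k \<in> ?P" then show "k \<in> ?Q" by auto
  next
    fix k assume k: "k \<in> ?Q"
    show "k \<in> ?P"
    proof (cases "k = 0")
      case True then show ?thesis using kcore_zero[OF g] by simp
    next
      case False
      then have kp: "0 < k" using k by simp
      obtain y where "y \<in> kcore w k" using k by blast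
      then have "k \<le> measure lebesgue (kcore w k)" by (rule kcore_measure[OF g kp])
      then show ?thesis using k kp by simp
    qed
  qed
  have Q0: "0 \<in> ?Q" using kcore_zero[OF g] by auto
  have neQ: "?Q \<noteq> {}" using Q0 by blast
  have bddQ: "bdd_above ?Q" by (rule bdd_aboveI[of _ 1]) auto
  have deg: "degeneracy w = Sup ?Q" unfolding degeneracy_def using PQ by simp
  have ubQ: "\<forall>k\<in>?Q. k \<le> degeneracy w"
    unfolding deg using bddQ by (auto intro: cSup_upper)
  have le1: "degeneracy w \<le> 1" unfolding deg using neQ by (intro cSup_least) auto
  have ge0: "0 \<le> degeneracy w" using ubQ Q0 by blast
  have degQ: "kcore w (degeneracy w) \<noteq> {}"
  proof (cases "degeneracy w = 0")
    case True then show ?thesis using Q0 by simp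
  next
    case False
    then have pos: "0 < degeneracy w" using ge0 by simp
    define \<kappa> where "\<kappa> = degeneracy w"
    define kj where "kj = (\<lambda>j::nat. \<kappa> - \<kappa> / (real j + 2))"
    have kj: "\<And>j. 0 < kj j" "\<And>j. kj j < \<kappa>" "incseq kj" "kj \<longlonglongrightarrow> \<kappa>"
      using kseq_props[of \<kappa>] pos unfolding kj_def \<kappa>_def by auto
    define A where "A = (\<lambda>j. kcore w (kj j))"
    have Ameas: "range A \<subseteq> sets lebesgue" unfolding A_def using kcore_meas[OF g] by blast
    have Adec: "decseq A" unfolding decseq_def A_def
    proof (intro allI impI)
      fix m p :: nat assume "m \<le> p"
      then have "kj m \<le> kj p" using kj(3) unfolding incseq_def by blast
      then show "kcore w (kj p) \<subseteq> kcore w (kj m)"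
        using kcore_mono[OF g less_imp_le[OF kj(1)[of m]]] by blast
    qed
    have Aq: "kj j \<le> measure lebesgue (A j)" for j
    proof -
      obtain t where t: "t \<in> ?Q" "kj j < t"
        using less_cSup_iff[OF neQ bddQ] kj(2)[of j] unfolding \<kappa>_def deg by blast
      then obtain y where "y \<in> kcore w t" by blast
      then have "y \<in> kcore w (kj j)" using kcore_mono[OF g less_imp_le[OF kj(1)[of j]], of t] t by auto
      then show ?thesis unfolding A_def by (rule kcore_measure[OF g kj(1)])
    qed
    have lim: "(\<lambda>j. measure lebesgue (A j)) \<longlonglongrightarrow> measure lebesgue (\<Inter>j. A j)"
    proof (rule Lim_measure_decseq[OF Ameas Adec])
      show "emeasure lebesgue (A j) \<noteq> \<infinity>" for j
        unfolding A_def by (rule finite_meas_sub[OF kcore_sub])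
    qed
    have "kj 0 \<le> measure lebesgue (A j)" for j
      using Aq[of j] kj(3) unfolding incseq_def by (meson le0 order_trans)
    then have "kj 0 \<le> measure lebesgue (\<Inter>j. A j)"
      by (intro LIMSEQ_le_const[OF lim]) auto
    then have "measure lebesgue (\<Inter>j. A j) > 0" using kj(1)[of 0] by linarith
    then obtain y where y: "y \<in> (\<Inter>j. A j)"
      by (metis equals0I measure_empty less_irrefl)
    have "y \<in> kcore w \<kappa>"
    proof (rule kcore_limit[OF g pos[folded \<kappa>_def]])
      fix k :: real assume k0: "0 \<le> k" and kl: "k < \<kappa>"
      have "eventually (\<lambda>j. k < kj j) sequentially"
        using order_tendstoD(1)[OF kj(4) kl] .
      then obtain j where "k < kj j" by (auto simp: eventually_sequentially)
      then show "y \<in> kcore w k" using y kcore_mono[OF g k0, of "kj j"] unfolding A_def by auto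
    qed
    then show ?thesis unfolding \<kappa>_def by blast
  qed
  have degin: "degeneracy w \<in> ?Q" using degQ le1 ge0 by simp
  have sh: "\<And>y. y \<in> {0..1} \<Longrightarrow> shell_index w y \<in> {k \<in> {0..1}. y \<in> kcore w k}
       \<and> (\<forall>k \<in> {k \<in> {0..1}. y \<in> kcore w k}. k \<le> shell_index w y)"
    by (rule shell_attained[OF g])
  have shQ: "\<forall>y \<in> {0..1}. shell_index w y \<le> degeneracy w"
  proof
    fix y :: real assume y: "y \<in> {0..1}"
    then have "shell_index w y \<in> ?Q" using sh[OF y] by blast
    then show "shell_index w y \<le> degeneracy w" using ubQ by blast
  qed
  have exy: "\<exists>y \<in> {0..1}. shell_index w y = degeneracy w"
  proof -
    obtain y where y: "y \<in> kcore w (degeneracy w)" using degQ by blast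
    then have yS: "y \<in> {0..1}" using kcore_sub by blast
    have "degeneracy w \<le> shell_index w y" using sh[OF yS] y le1 ge0 by simp
    then show ?thesis using shQ yS by (intro bexI[of _ y]) (auto intro: antisym)
  qed
  show ?thesis
    using shell_attained[OF g assms(2)] PQ degin ubQ shQ exy by simp
qed

end
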